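(* Let $M$ be a von Neumann algebra acting on a Hilbert space $H$, let $a \in [0,1]_M$ be strict in $M$, and let $p \in M$ be a projection. Write $a = \begin{bmatrix} a_{11} & a_{12} \\ a_{12}^* & a_{22}\end{bmatrix}$ with respect to $\{p, 1-p\}$, i.e. $a_{11} = pap$, $a_{12} = pa(1-p)$, $a_{22} = (1-p)a(1-p)$. Then $a_{11} \in [0,p]$ is strict in the von Neumann algebra $pMp$ and $a_{22} \in [0,1-p]$ is strict in the von Neumann algebra $(1-p)M(1-p)$.
   Context: For a von Neumann algebra $N$ with unit $1_N$, $[0,1]_N = \{x \in N : 0 \le x \le 1_N\}$, and $\mathcal{P}(N)$ is the set of projections of $N$. For $x \in [0,1]_N$ define $s(x) = \sup\{q \in \mathcal{P}(N) : q \le x\}$ and $n(x) = \sup\{q \in \mathcal{P}(N) : qx = 0\}$; $x$ is called strict in $N$ if $s(x) = 0$ and $n(x) = 0$. The algebras $pMp$ and $(1-p)M(1-p)$ are regarded as von Neumann algebras with units $p$ and $1-p$ respectively. *)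

theory Defs
  imports "HOL-Analysis.Analysis"
begin

class complex_vector = real_vector +
  fixes scaleC :: "complex \<Rightarrow> 'a \<Rightarrow> 'a"
  assumes scaleC_add_right: "scaleC c (x + y) = scaleC c x + scaleC c y"
    and scaleC_add_left: "scaleC (c + d) x = scaleC c x + scaleC d x"
    and scaleC_scaleC: "scaleC c (scaleC d x) = scaleC (c * d) x"
    and scaleC_one: "scaleC 1 x = x"
    and scaleR_scaleC: "scaleR r x = scaleC (complex_of_real r) x"

class complex_inner = complex_vector + real_normed_vector +
  fixes cinner :: "'a \<Rightarrow> 'a \<Rightarrow> complex"
  assumes cinner_commute: "cinner x y = cnj (cinner y x)"
    and cinner_add_left: "cinner (x + y) z = cinner x z + cinner y z"
    and cinner_scaleC_left: "cinner (scaleC c x) y = cnj c * cinner x y"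
    and cinner_self_real: "Im (cinner x x) = 0"
    and cinner_self_nonneg: "0 \<le> Re (cinner x x)"
    and cinner_self_eq_zero: "cinner x x = 0 \<longleftrightarrow> x = 0"
    and norm_eq_sqrt_cinner: "norm x = sqrt (Re (cinner x x))"

class chilbert_space = complex_inner + complete_space

definition bounded_clinear :: "('h::complex_inner \<Rightarrow> 'h) \<Rightarrow> bool" where
  "bounded_clinear T \<longleftrightarrow>
     (\<forall>x y. T (x + y) = T x + T y) \<and> (\<forall>c x. T (scaleC c x) = scaleC c (T x)) \<and>
     (\<exists>K. \<forall>x. norm (T x) \<le> norm x * K)"

definition adj :: "('h::complex_inner \<Rightarrow> 'h) \<Rightarrow> ('h \<Rightarrow> 'h)" where
  "adj T = (\<lambda>y. THE z. \<forall>x. cinner (T x) y = cinner x z)"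

definition op_pos :: "('h::complex_inner \<Rightarrow> 'h) \<Rightarrow> bool" where
  "op_pos T \<longleftrightarrow> (\<forall>x. Im (cinner x (T x)) = 0 \<and> 0 \<le> Re (cinner x (T x)))"

definition op_le :: "('h::complex_inner \<Rightarrow> 'h) \<Rightarrow> ('h \<Rightarrow> 'h) \<Rightarrow> bool" where
  "op_le S T \<longleftrightarrow> op_pos (\<lambda>x. T x - S x)"

definition commutant :: "('h::complex_inner \<Rightarrow> 'h) set \<Rightarrow> ('h \<Rightarrow> 'h) set" where
  "commutant S = {T. bounded_clinear T \<and> (\<forall>A\<in>S. T \<circ> A = A \<circ> T)}"

text \<open>Von Neumann algebra on H: a self-adjoint set of bounded operators equal to its
  double commutant (equivalently, by the bicommutant theorem, a unital
  weak-operator-closed *-subalgebra of B(H)).\<close>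
definition von_neumann_algebra :: "('h::chilbert_space \<Rightarrow> 'h) set \<Rightarrow> bool" where
  "von_neumann_algebra M \<longleftrightarrow>
     (\<forall>T\<in>M. bounded_clinear T) \<and> (\<forall>T\<in>M. adj T \<in> M) \<and> commutant (commutant M) = M"

definition op_interval :: "('h::complex_inner \<Rightarrow> 'h) set \<Rightarrow> ('h \<Rightarrow> 'h) \<Rightarrow> ('h \<Rightarrow> 'h) set" where
  "op_interval N e = {x\<in>N. op_le (\<lambda>_. 0) x \<and> op_le x e}"

definition projections :: "('h::complex_inner \<Rightarrow> 'h) set \<Rightarrow> ('h \<Rightarrow> 'h) set" where
  "projections N = {q\<in>N. q \<circ> q = q \<and> adj q = q}"

definition proj_sup :: "('h::complex_inner \<Rightarrow> 'h) set \<Rightarrow> ('h \<Rightarrow> 'h) set \<Rightarrow> ('h \<Rightarrow> 'h)" where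
  "proj_sup N Q = (THE s. s \<in> projections N \<and> (\<forall>q\<in>Q. op_le q s) \<and>
                          (\<forall>r\<in>projections N. (\<forall>q\<in>Q. op_le q r) \<longrightarrow> op_le s r))"

definition s_supp :: "('h::complex_inner \<Rightarrow> 'h) set \<Rightarrow> ('h \<Rightarrow> 'h) \<Rightarrow> ('h \<Rightarrow> 'h)" where
  "s_supp N x = proj_sup N {q\<in>projections N. op_le q x}"

definition n_supp :: "('h::complex_inner \<Rightarrow> 'h) set \<Rightarrow> ('h \<Rightarrow> 'h) \<Rightarrow> ('h \<Rightarrow> 'h)" where
  "n_supp N x = proj_sup N {q\<in>projections N. q \<circ> x = (\<lambda>_. 0)}"

definition strict_in :: "('h::complex_inner \<Rightarrow> 'h) set \<Rightarrow> ('h \<Rightarrow> 'h) \<Rightarrow> bool" where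
  "strict_in N x \<longleftrightarrow> s_supp N x = (\<lambda>_. 0) \<and> n_supp N x = (\<lambda>_. 0)"

text \<open>Corner algebra qMq (as a set of operators on H, unit q).\<close>
definition corner :: "('h \<Rightarrow> 'h) \<Rightarrow> ('h \<Rightarrow> 'h) set \<Rightarrow> ('h \<Rightarrow> 'h) set" where
  "corner q M = (\<lambda>x. q \<circ> x \<circ> q) ` M"

end

theory Submission
  imports Defs
begin



lemma cinner_add_right: "cinner x (y + z) = cinner x y + cinner x z"
  by (metis cinner_commute cinner_add_left complex_cnj_add)

lemma cinner_scaleC_right: "cinner x (scaleC c y) = c * cinner x y"
  by (metis cinner_commute cinner_scaleC_left complex_cnj_cnj complex_cnj_mult)

lemma cinner_zero_left: "cinner 0 y = 0"
  using cinner_add_left[of 0 0 y] by simp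

lemma cinner_zero_right: "cinner x 0 = 0"
  using cinner_add_right[of x 0 0] by simp

lemma scaleC_minus1: "scaleC (-1) x = - x"
  by (metis scaleR_scaleC scaleR_minus1_left of_real_1 of_real_minus)

lemma scaleC_zero_right: "scaleC c 0 = 0"
  using scaleC_add_right[of c 0 0] by simp

lemma scaleC_zero_left: "scaleC 0 x = 0"
  by (metis scaleR_scaleC scaleR_zero_left of_real_0)

lemma cinner_minus_left: "cinner (- x) y = - cinner x y"
  by (metis scaleC_minus1 cinner_scaleC_left complex_cnj_minus complex_cnj_one mult_minus1)

lemma cinner_minus_right: "cinner x (- y) = - cinner x y"
  by (metis scaleC_minus1 cinner_scaleC_right mult_minus1)

lemma cinner_diff_left: "cinner (x - y) z = cinner x z - cinner y z"
  using cinner_add_left[of x "-y" z] by (simp add: cinner_minus_left)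

lemma cinner_diff_right: "cinner x (y - z) = cinner x y - cinner x z"
  using cinner_add_right[of x y "-z"] by (simp add: cinner_minus_right)

lemma cinner_scaleR_left: "cinner (scaleR r x) y = of_real r * cinner x y"
  by (simp add: scaleR_scaleC cinner_scaleC_left)

lemma cinner_scaleR_right: "cinner x (scaleR r y) = of_real r * cinner x y"
  by (simp add: scaleR_scaleC cinner_scaleC_right)

lemma cinner_self: "cinner x x = complex_of_real ((norm x)\<^sup>2)"
  using cinner_self_real[of x] cinner_self_nonneg[of x] norm_eq_sqrt_cinner[of x]
  by (simp add: complex_eq_iff)

lemma norm_sq: "(norm x)\<^sup>2 = Re (cinner x x)"
  by (simp add: cinner_self)

lemma scaleC_diff_right: "scaleC c (x - y) = scaleC c x - scaleC c y"
  by (metis add_diff_cancel scaleC_add_right diff_add_cancel)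

lemma cauchy_schwarz: "cmod (cinner x y) \<le> norm x * norm y"
proof (cases "y = 0")
  case True then show ?thesis by (simp add: cinner_zero_right)
next
  case False
  define c where "c = cinner y x / cinner y y"
  have yy: "cinner y y = of_real ((norm y)\<^sup>2)" by (rule cinner_self)
  have ny: "norm y > 0" using False by simp
  have "0 \<le> Re (cinner (x - scaleC c y) (x - scaleC c y))" by (rule cinner_self_nonneg)
  also have "cinner (x - scaleC c y) (x - scaleC c y)
     = cinner x x - c * cinner x y - cnj c * cinner y x + cnj c * c * cinner y y"
    by (simp add: cinner_diff_left cinner_diff_right cinner_scaleC_left cinner_scaleC_right algebra_simps)
  also have "c * cinner y y = cinner y x"
    using False by (simp add: c_def cinner_self_eq_zero)
  then have "cnj c * c * cinner y y = cnj c * cinner y x" by (simp add: mult.assoc)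
  also have "c * cinner x y = cinner y x * cnj (cinner y x) / of_real ((norm y)\<^sup>2)"
    by (simp add: c_def yy cinner_commute[of x y])
  also have "cinner y x * cnj (cinner y x) = of_real ((cmod (cinner y x))\<^sup>2)"
    by (simp add: complex_norm_square[symmetric] del: of_real_power)
  finally have "0 \<le> (norm x)\<^sup>2 - (cmod (cinner y x))\<^sup>2 / (norm y)\<^sup>2"
    by (simp add: cinner_self)
  then have "(cmod (cinner y x))\<^sup>2 \<le> (norm x)\<^sup>2 * (norm y)\<^sup>2"
    using ny by (simp add: field_simps)
  then have "(cmod (cinner y x))\<^sup>2 \<le> (norm x * norm y)\<^sup>2" by (simp add: power_mult_distrib)
  then have "cmod (cinner y x) \<le> norm x * norm y"
    by (rule power2_le_imp_le) simp
  then show ?thesis by (metis cinner_commute complex_mod_cnj)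
qed



definition clin :: "('a::complex_vector \<Rightarrow> 'a) \<Rightarrow> bool" where
  "clin T \<longleftrightarrow> (\<forall>x y. T (x + y) = T x + T y) \<and> (\<forall>c x. T (scaleC c x) = scaleC c (T x))"

lemma clin_add: "clin T \<Longrightarrow> T (x + y) = T x + T y" by (simp add: clin_def)
lemma clin_scaleC: "clin T \<Longrightarrow> T (scaleC c x) = scaleC c (T x)" by (simp add: clin_def)
lemma clin_zero: "clin T \<Longrightarrow> T 0 = 0"
  using clin_add[of T 0 0] by simp
lemma clin_minus: "clin T \<Longrightarrow> T (- x) = - T x"
  by (metis clin_scaleC scaleC_minus1)
lemma clin_diff: "clin T \<Longrightarrow> T (x - y) = T x - T y"
  by (metis clin_add clin_minus diff_conv_add_uminus)
lemma clin_scaleR: "clin T \<Longrightarrow> T (scaleR r x) = scaleR r (T x)"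
  by (simp add: scaleR_scaleC clin_scaleC)

lemma bcl_clin: "bounded_clinear T \<Longrightarrow> clin T"
  by (simp add: bounded_clinear_def clin_def)

lemma bcl_bounded_linear: "bounded_clinear T \<Longrightarrow> bounded_linear T"
proof -
  assume a: "bounded_clinear T"
  then obtain K where K: "\<forall>x. norm (T x) \<le> norm x * K" by (auto simp: bounded_clinear_def)
  show ?thesis
  proof (rule bounded_linear_intro[where K=K])
    show "T (x + y) = T x + T y" for x y using a by (simp add: bounded_clinear_def)
    show "T (r *\<^sub>R x) = r *\<^sub>R T x" for r x using a by (simp add: bounded_clinear_def scaleR_scaleC)
    show "norm (T x) \<le> norm x * K" for x using K by blast
  qed
qed

lemma clin_comp: "clin S \<Longrightarrow> clin T \<Longrightarrow> clin (S \<circ> T)"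
  by (simp add: clin_def)

lemma bcl_comp: "bounded_clinear S \<Longrightarrow> bounded_clinear T \<Longrightarrow> bounded_clinear (S \<circ> T)"
proof -
  assume s: "bounded_clinear S" and t: "bounded_clinear T"
  obtain K1 where K1: "\<forall>x. norm (S x) \<le> norm x * K1" using s by (auto simp: bounded_clinear_def)
  obtain K2 where K2: "\<forall>x. norm (T x) \<le> norm x * K2" using t by (auto simp: bounded_clinear_def)
  have "\<forall>x. norm (S (T x)) \<le> norm x * (K2 * max K1 0)"
  proof
    fix x
    have "norm (S (T x)) \<le> norm (T x) * max K1 0"
    proof -
      have "norm (S (T x)) \<le> norm (T x) * K1" using K1 by blast
      also have "\<dots> \<le> norm (T x) * max K1 0" by (rule mult_left_mono) auto
      finally show ?thesis .
    qed
    also have "\<dots> \<le> norm x * K2 * max K1 0" using K2 by (intro mult_right_mono) auto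
    finally show "norm (S (T x)) \<le> norm x * (K2 * max K1 0)" by (simp add: mult.assoc)
  qed
  then show ?thesis using s t by (auto simp: bounded_clinear_def)
qed

lemma bcl_id: "bounded_clinear id"
  unfolding bounded_clinear_def by (auto intro: exI[of _ 1])

lemma bcl_zero: "bounded_clinear (\<lambda>_::'a::complex_inner. 0)"
  unfolding bounded_clinear_def by (auto simp: scaleC_zero_right intro: exI[of _ 0])

lemma bcl_diff: "bounded_clinear S \<Longrightarrow> bounded_clinear T \<Longrightarrow> bounded_clinear (\<lambda>x. S x - T x)"
proof -
  assume s: "bounded_clinear S" and t: "bounded_clinear T"
  obtain K1 where K1: "\<forall>x. norm (S x) \<le> norm x * K1" using s by (auto simp: bounded_clinear_def)
  obtain K2 where K2: "\<forall>x. norm (T x) \<le> norm x * K2" using t by (auto simp: bounded_clinear_def)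
  have "\<forall>x. norm (S x - T x) \<le> norm x * (K1 + K2)"
  proof
    fix x
    have "norm (S x - T x) \<le> norm (S x) + norm (T x)" by (rule norm_triangle_ineq4)
    also have "\<dots> \<le> norm x * K1 + norm x * K2" using K1 K2 by (intro add_mono) auto
    finally show "norm (S x - T x) \<le> norm x * (K1 + K2)" by (simp add: distrib_left)
  qed
  then show ?thesis using s t by (auto simp: bounded_clinear_def scaleC_diff_right)
qed

lemma quad_zero:
  fixes c d :: real
  assumes "\<forall>t. 0 \<le> 2*t*c + t^2*d"
  shows "c = 0"
proof (rule ccontr)
  assume c: "c \<noteq> 0"
  have "0 \<le> 2*c + d" "0 \<le> -2*c + d" using assms[rule_format, of 1] assms[rule_format, of "-1"] by auto
  then have d: "d \<ge> 0" by linarith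
  define t where "t = -c/(d+1)"
  have tt: "t * (d+1) = -c" using d by (simp add: t_def)
  have "0 \<le> 2*t*c + t^2*d" using assms by blast
  then have "0 \<le> (d+1)^2 * (2*t*c + t^2*d)" using d by simp
  also have "(d+1)^2 * (2*t*c + t^2*d) = 2*c*(t*(d+1))*(d+1) + (t*(d+1))^2 * d"
    by (simp add: algebra_simps power2_eq_square)
  also have "\<dots> = - (c^2 * (d+2))" unfolding tt by (simp add: algebra_simps power2_eq_square)
  finally have "c^2 * (d+2) \<le> 0" by simp
  moreover have "c^2 * (d+2) > 0" using c d by simp
  ultimately show False by simp
qed

lemma herm:
  assumes D: "clin D" and im: "\<forall>x. Im (cinner x (D x)) = 0"
  shows "cinner x (D y) = cinner (D x) y"
proof -
  have e1: "cinner (x + y) (D (x + y)) = cinner x (D x) + cinner x (D y) + cinner y (D x) + cinner y (D y)"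
    using D by (simp add: clin_add cinner_add_left cinner_add_right)
  have e2: "cinner (x + scaleC \<i> y) (D (x + scaleC \<i> y)) =
      cinner x (D x) + \<i> * cinner x (D y) - \<i> * cinner y (D x) + cinner y (D y)"
    using D by (simp add: clin_add clin_scaleC cinner_add_left cinner_add_right cinner_scaleC_left cinner_scaleC_right algebra_simps)
  have "Im (cinner x (D y)) + Im (cinner y (D x)) = 0"
    using im[rule_format, of "x+y"] im[rule_format, of x] im[rule_format, of y] e1 by simp
  moreover have "Re (cinner x (D y)) - Re (cinner y (D x)) = 0"
    using im[rule_format, of "x + scaleC \<i> y"] im[rule_format, of x] im[rule_format, of y] e2 by simp
  ultimately have "cinner x (D y) = cnj (cinner y (D x))" by (simp add: complex_eq_iff)
  then show ?thesis by (metis cinner_commute)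
qed

lemma pos_herm: "clin D \<Longrightarrow> op_pos D \<Longrightarrow> cinner x (D y) = cinner (D x) y"
  by (rule herm) (auto simp: op_pos_def)

lemma pos_zero:
  assumes D: "clin D" and pos: "op_pos D" and z: "cinner x (D x) = 0"
  shows "D x = 0"
proof -
  let ?y = "D x"
  have h: "cinner x (D ?y) = cinner ?y ?y" using pos_herm[OF D pos] by simp
  have "\<forall>t::real. 0 \<le> 2*t*(norm ?y)^2 + t^2 * Re (cinner ?y (D ?y))"
  proof
    fix t :: real
    have "0 \<le> Re (cinner (x + scaleR t ?y) (D (x + scaleR t ?y)))"
      using pos by (simp add: op_pos_def)
    also have "cinner (x + scaleR t ?y) (D (x + scaleR t ?y)) =
       cinner x (D x) + of_real t * cinner x (D ?y) + of_real t * cinner ?y (D x) + of_real t * of_real t * cinner ?y (D ?y)"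
      using D by (simp add: clin_add clin_scaleR cinner_add_left cinner_add_right cinner_scaleR_left cinner_scaleR_right algebra_simps)
    finally show "0 \<le> 2*t*(norm ?y)^2 + t^2 * Re (cinner ?y (D ?y))"
      using z h by (simp add: cinner_self power2_eq_square)
  qed
  then have "(norm ?y)^2 = 0" by (rule quad_zero)
  then show ?thesis by simp
qed

lemma op_le_antisym:
  assumes "clin S" "clin T" "op_le S T" "op_le T S"
  shows "S = T"
proof
  fix x
  let ?D = "\<lambda>x. T x - S x"
  have D: "clin ?D" using assms(1,2) by (simp add: clin_def scaleC_diff_right)
  have p1: "op_pos ?D" using assms(3) by (simp add: op_le_def)
  have p2: "op_pos (\<lambda>x. S x - T x)" using assms(4) by (simp add: op_le_def)
  have "Re (cinner x (?D x)) \<ge> 0" "Im (cinner x (?D x)) = 0" using p1 by (auto simp: op_pos_def)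
  moreover have "Re (cinner x (S x - T x)) \<ge> 0" using p2 by (auto simp: op_pos_def)
  ultimately have "cinner x (?D x) = 0" by (simp add: complex_eq_iff cinner_diff_right)
  then have "?D x = 0" using pos_zero[OF D p1] by blast
  then show "S x = T x" by simp
qed



lemma parallelogram:
  fixes a b :: "'a::complex_inner"
  shows "(norm (a + b))\<^sup>2 + (norm (a - b))\<^sup>2 = 2 * (norm a)\<^sup>2 + 2 * (norm b)\<^sup>2"
proof -
  have "cinner (a + b) (a + b) + cinner (a - b) (a - b) = 2 * cinner a a + 2 * cinner b b"
    by (simp add: cinner_add_left cinner_add_right cinner_diff_left cinner_diff_right algebra_simps)
  then have "Re (cinner (a + b) (a + b)) + Re (cinner (a - b) (a - b)) = 2 * Re (cinner a a) + 2 * Re (cinner b b)"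
    by (metis plus_complex.sel(1) Re_complex_of_real times_complex.sel(1) mult_2 plus_complex.sel(1))
  then show ?thesis by (simp add: norm_sq)
qed

definition subspace_c :: "'a::complex_vector set \<Rightarrow> bool" where
  "subspace_c K \<longleftrightarrow> 0 \<in> K \<and> (\<forall>x\<in>K. \<forall>y\<in>K. x + y \<in> K) \<and> (\<forall>c. \<forall>x\<in>K. scaleC c x \<in> K)"

lemma proj_exists:
  fixes K :: "'a::chilbert_space set" and x :: 'a
  assumes sub: "subspace_c K" and cl: "closed K"
  shows "\<exists>u\<in>K. \<forall>k\<in>K. cinner k (x - u) = 0"
proof -
  have K0: "0 \<in> K" and Kadd: "\<And>a b. a \<in> K \<Longrightarrow> b \<in> K \<Longrightarrow> a + b \<in> K"
    and Ksc: "\<And>c a. a \<in> K \<Longrightarrow> scaleC c a \<in> K" using sub by (auto simp: subspace_c_def)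
  have KsR: "\<And>r a. a \<in> K \<Longrightarrow> scaleR r a \<in> K" by (simp add: scaleR_scaleC Ksc)
  define D where "D = (\<lambda>k. (norm (x - k))\<^sup>2) ` K"
  define d where "d = Inf D"
  have Dne: "D \<noteq> {}" using K0 by (auto simp: D_def)
  have Dbdd: "bdd_below D" unfolding D_def by (rule bdd_belowI[of _ 0]) auto
  have dle: "\<And>k. k \<in> K \<Longrightarrow> d \<le> (norm (x - k))\<^sup>2"
    unfolding d_def D_def by (rule cInf_lower) (use Dbdd D_def in auto)
  have ex: "\<exists>k\<in>K. (norm (x - k))\<^sup>2 < d + e" if "e > 0" for e
  proof -
    have "Inf D < d + e" using that by (simp add: d_def)
    then obtain y where "y \<in> D" "y < d + e" using cInf_lessD[OF Dne] by blast
    then show ?thesis by (auto simp: D_def)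
  qed
  have "\<forall>n. \<exists>k. k \<in> K \<and> (norm (x - k))\<^sup>2 < d + 1 / real (Suc n)"
    using ex by (metis of_nat_0_less_iff zero_less_Suc zero_less_divide_1_iff)
  then obtain kk where kkK: "\<And>n. kk n \<in> K" and kkd: "\<And>n. (norm (x - kk n))\<^sup>2 < d + 1 / real (Suc n)"
    by metis
  have close: "(norm (kk m - kk n))\<^sup>2 \<le> 2 / real (Suc m) + 2 / real (Suc n)" for m n
  proof -
    let ?a = "x - kk m" and ?b = "x - kk n"
    define mid where "mid = scaleR (1/2) (kk m + kk n)"
    have midK: "mid \<in> K" unfolding mid_def by (intro KsR Kadd kkK)
    have "?a + ?b = scaleR 2 (x - mid)" by (simp add: mid_def algebra_simps scaleR_2)
    then have "(norm (?a + ?b))\<^sup>2 = 4 * (norm (x - mid))\<^sup>2" by (simp add: power2_eq_square)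
    moreover have "d \<le> (norm (x - mid))\<^sup>2" by (rule dle[OF midK])
    moreover have "(norm (?a + ?b))\<^sup>2 + (norm (kk n - kk m))\<^sup>2 = 2 * (norm ?a)\<^sup>2 + 2 * (norm ?b)\<^sup>2"
      using parallelogram[of ?a ?b] by simp
    moreover have "2 / real (Suc m) = 2 * (1 / real (Suc m))" "2 / real (Suc n) = 2 * (1 / real (Suc n))" by simp_all
    moreover note kkd[of m] kkd[of n]
    ultimately have "(norm (kk n - kk m))\<^sup>2 \<le> 2 / real (Suc m) + 2 / real (Suc n)" by linarith
    then show ?thesis by (simp add: norm_minus_commute)
  qed
  have "Cauchy kk"
  proof (rule CauchyI)
    fix e :: real assume e: "0 < e"
    obtain N :: nat where N: "4 / e\<^sup>2 < real N" using reals_Archimedean2 by blast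
    have Npos: "real N > 0" using N e by (smt (verit) divide_pos_pos zero_less_power)
    show "\<exists>M. \<forall>m\<ge>M. \<forall>n\<ge>M. norm (kk m - kk n) < e"
    proof (intro exI allI impI)
      fix m n assume mn: "N \<le> m" "N \<le> n"
      have "2 / real (Suc m) \<le> 2 / real N" using mn Npos by (simp add: frac_le)
      moreover have "2 / real (Suc n) \<le> 2 / real N" using mn Npos by (simp add: frac_le)
      moreover have "4 / real N < e\<^sup>2" using N e Npos by (simp add: field_simps)
      ultimately have "(norm (kk m - kk n))\<^sup>2 < e\<^sup>2" using close[of m n] by simp
      then show "norm (kk m - kk n) < e" using e by (simp add: power_less_imp_less_base)
    qed
  qed
  then obtain u where lim: "kk \<longlonglongrightarrow> u" using Cauchy_convergent convergent_def by blast
  have uK: "u \<in> K" using closed_sequentially[OF cl kkK lim] .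
  have L1: "(\<lambda>n. (norm (x - kk n))\<^sup>2) \<longlonglongrightarrow> (norm (x - u))\<^sup>2"
    by (intro tendsto_intros lim)
  have "(\<lambda>n. d + 1 / real (Suc n)) \<longlonglongrightarrow> d + 0"
    by (intro tendsto_intros LIMSEQ_inverse_real_of_nat[unfolded inverse_eq_divide])
  then have L2: "(\<lambda>n. d + 1 / real (Suc n)) \<longlonglongrightarrow> d" by simp
  have "\<exists>N. \<forall>n\<ge>N. (norm (x - kk n))\<^sup>2 \<le> d + 1 / real (Suc n)"
    using kkd less_imp_le by blast
  then have ud: "(norm (x - u))\<^sup>2 \<le> d" by (rule LIMSEQ_le[OF L1 L2])
  show ?thesis
  proof (intro bexI[OF _ uK] ballI)
    fix k assume kK: "k \<in> K"
    define w where "w = x - u"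
    define c where "c = cinner k w"
    have "\<forall>s::real. 0 \<le> 2 * s * (- ((cmod c)\<^sup>2)) + s\<^sup>2 * ((cmod c)\<^sup>2 * (norm k)\<^sup>2)"
    proof
      fix s :: real
      define t where "t = complex_of_real s * c"
      have "u + scaleC t k \<in> K" by (intro Kadd uK Ksc kK)
      then have "d \<le> (norm (w - scaleC t k))\<^sup>2" using dle[of "u + scaleC t k"] by (simp add: w_def algebra_simps)
      also have "(norm (w - scaleC t k))\<^sup>2 = Re (cinner (w - scaleC t k) (w - scaleC t k))" by (rule norm_sq)
      also have "cinner (w - scaleC t k) (w - scaleC t k) = cinner w w - t * cinner w k - cnj t * cinner k w + cnj t * t * cinner k k"
        by (simp add: cinner_diff_left cinner_diff_right cinner_scaleC_left cinner_scaleC_right algebra_simps)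
      also have "t * cinner w k = of_real s * (c * cnj c)" by (simp add: t_def c_def cinner_commute[of w k])
      also have "cnj t * cinner k w = of_real s * (c * cnj c)" by (simp add: t_def c_def)
      also have "cnj t * t = of_real s * of_real s * (c * cnj c)" by (simp add: t_def)
      also have "c * cnj c = of_real ((cmod c)\<^sup>2)" by (simp add: complex_norm_square[symmetric] del: of_real_power)
      finally have "d \<le> (norm w)\<^sup>2 - 2 * s * (cmod c)\<^sup>2 + s\<^sup>2 * ((cmod c)\<^sup>2 * (norm k)\<^sup>2)"
        by (simp add: cinner_self power2_eq_square)
      then show "0 \<le> 2 * s * (- ((cmod c)\<^sup>2)) + s\<^sup>2 * ((cmod c)\<^sup>2 * (norm k)\<^sup>2)"
        using ud by (simp add: w_def)
    qed
    then have "- ((cmod c)\<^sup>2) = 0" by (rule quad_zero)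
    then show "cinner k (x - u) = 0" by (simp add: c_def w_def)
  qed
qed



lemma riesz:
  fixes f :: "'a::chilbert_space \<Rightarrow> complex"
  assumes fadd: "\<And>x y. f (x + y) = f x + f y" and fsc: "\<And>c x. f (scaleC c x) = c * f x"
    and fb: "\<And>x. cmod (f x) \<le> norm x * K"
  shows "\<exists>z. \<forall>x. f x = cinner z x"
proof (cases "\<forall>x. f x = 0")
  case True then show ?thesis by (auto intro: exI[of _ 0] simp: cinner_zero_left)
next
  case False
  then obtain x0 where fx0: "f x0 \<noteq> 0" by blast
  have bl: "bounded_linear f"
    by (rule bounded_linear_intro[where K=K]) (auto simp: fadd fsc scaleR_scaleC fb scaleR_conv_of_real)
  let ?N = "{x. f x = 0}"
  have cl: "closed ?N"
    by (rule closed_Collect_eq) (auto intro: linear_continuous_on[OF bl])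
  have f0: "f 0 = 0" using fadd[of 0 0] by simp
  have fminus: "f (- x) = - f x" for x by (metis fsc scaleC_minus1 mult_minus1)
  have fdiff: "f (x - y) = f x - f y" for x y by (metis fadd fminus diff_conv_add_uminus)
  have sub: "subspace_c ?N" by (auto simp: subspace_c_def f0 fadd fsc)
  obtain u where uN: "u \<in> ?N" and orth: "\<forall>k\<in>?N. cinner k (x0 - u) = 0"
    using proj_exists[OF sub cl] by blast
  define w where "w = x0 - u"
  have fw: "f w = f x0" using uN by (simp add: w_def fdiff)
  have w0: "w \<noteq> 0" using fw fx0 f0 by auto
  have ww: "cinner w w \<noteq> 0" using w0 by (simp add: cinner_self_eq_zero)
  define z where "z = scaleC (cnj (f w) / cnj (cinner w w)) w"
  show ?thesis
  proof (intro exI allI)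
    fix x
    define k where "k = scaleC (f w) x - scaleC (f x) w"
    have "f k = 0" by (simp add: k_def fdiff fsc)
    then have "cinner k w = 0" using orth by (simp add: w_def)
    then have "cnj (f w) * cinner x w = cnj (f x) * cinner w w"
      by (simp add: k_def cinner_diff_left cinner_scaleC_left)
    then have "f w * cinner w x = f x * cnj (cinner w w)"
      by (metis cinner_commute complex_cnj_cnj complex_cnj_mult)
    moreover have "cnj (cinner w w) = cinner w w" by (metis cinner_commute)
    ultimately have "f x = f w * cinner w x / cinner w w" using ww by (simp add: field_simps)
    also have "\<dots> = cinner z x" using ww by (simp add: z_def cinner_scaleC_left \<open>cnj (cinner w w) = cinner w w\<close>)
    finally show "f x = cinner z x" .
  qed
qed

lemma adj_exists:
  fixes T :: "'a::chilbert_space \<Rightarrow> 'a"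
  assumes "bounded_clinear T"
  shows "\<exists>z. \<forall>x. cinner (T x) y = cinner x z"
proof -
  have lin: "clin T" using assms by (rule bcl_clin)
  obtain K where K: "\<forall>x. norm (T x) \<le> norm x * K" using assms by (auto simp: bounded_clinear_def)
  have "\<exists>z. \<forall>x. cinner y (T x) = cinner z x"
  proof (rule riesz[where K="norm y * K"])
    show "cinner y (T (x + x')) = cinner y (T x) + cinner y (T x')" for x x'
      using lin by (simp add: clin_add cinner_add_right)
    show "cinner y (T (scaleC c x)) = c * cinner y (T x)" for c x
      using lin by (simp add: clin_scaleC cinner_scaleC_right)
    show "cmod (cinner y (T x)) \<le> norm x * (norm y * K)" for x
    proof -
      have "cmod (cinner y (T x)) \<le> norm y * norm (T x)" by (rule cauchy_schwarz)
      also have "\<dots> \<le> norm y * (norm x * K)" using K by (simp add: mult_left_mono)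
      finally show ?thesis by (simp add: algebra_simps)
    qed
  qed
  then obtain z where "\<forall>x. cinner y (T x) = cinner z x" by blast
  then have "\<forall>x. cinner (T x) y = cinner x z" by (metis cinner_commute)
  then show ?thesis by blast
qed

lemma adj_prop:
  fixes T :: "'a::chilbert_space \<Rightarrow> 'a"
  assumes "bounded_clinear T"
  shows "cinner (T x) y = cinner x (adj T y)"
proof -
  obtain z where z: "\<forall>x. cinner (T x) y = cinner x z" using adj_exists[OF assms] by blast
  have uniq: "z' = z" if "\<forall>x. cinner (T x) y = cinner x z'" for z'
  proof -
    have "cinner (z' - z) (z' - z) = 0" using that z by (simp add: cinner_diff_right)
    then show ?thesis by (simp add: cinner_self_eq_zero)
  qed
  have "adj T y = z" unfolding adj_def
    by (rule the_equality) (use z uniq in auto)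
  then show ?thesis using z by simp
qed

lemma adj_unique:
  fixes T S :: "'a::chilbert_space \<Rightarrow> 'a"
  assumes "\<And>x y. cinner (T x) y = cinner x (S y)"
  shows "adj T = S"
proof
  fix y
  have uniq: "z' = S y" if "\<forall>x. cinner (T x) y = cinner x z'" for z'
  proof -
    have "cinner (z' - S y) (z' - S y) = 0" using that assms by (simp add: cinner_diff_right)
    then show ?thesis by (simp add: cinner_self_eq_zero)
  qed
  show "adj T y = S y" unfolding adj_def
    by (rule the_equality) (use assms uniq in auto)
qed

lemma eq_by_cinner:
  fixes a b :: "'a::complex_inner"
  assumes "\<And>x. cinner x a = cinner x b"
  shows "a = b"
proof -
  have "cinner (a - b) (a - b) = 0" using assms by (simp add: cinner_diff_right)
  then show ?thesis by (simp add: cinner_self_eq_zero)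
qed

lemma adj_bcl:
  fixes T :: "'a::chilbert_space \<Rightarrow> 'a"
  assumes T: "bounded_clinear T"
  shows "bounded_clinear (adj T)"
proof -
  note ap = adj_prop[OF T]
  obtain K where K: "\<forall>x. norm (T x) \<le> norm x * K" using T by (auto simp: bounded_clinear_def)
  have add: "adj T (x + y) = adj T x + adj T y" for x y
    by (rule eq_by_cinner) (simp add: ap[symmetric] cinner_add_right)
  have sc: "adj T (scaleC c x) = scaleC c (adj T x)" for c x
    by (rule eq_by_cinner) (simp add: ap[symmetric] cinner_scaleC_right)
  have "norm (adj T y) \<le> norm y * max K 0" for y
  proof -
    let ?v = "adj T y"
    have "(norm ?v)\<^sup>2 = Re (cinner ?v ?v)" by (rule norm_sq)
    also have "cinner ?v ?v = cnj (cinner (T ?v) y)" by (metis ap cinner_commute)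
    also have "Re (cnj (cinner (T ?v) y)) \<le> cmod (cinner (T ?v) y)"
      by (metis complex_Re_le_cmod complex_mod_cnj)
    also have "\<dots> \<le> norm (T ?v) * norm y" by (rule cauchy_schwarz)
    also have "\<dots> \<le> norm ?v * max K 0 * norm y"
    proof (rule mult_right_mono)
      have "norm (T ?v) \<le> norm ?v * K" using K by blast
      also have "\<dots> \<le> norm ?v * max K 0" by (rule mult_left_mono) auto
      finally show "norm (T ?v) \<le> norm ?v * max K 0" .
    qed simp
    finally have "norm ?v * norm ?v \<le> norm ?v * (norm y * max K 0)"
      by (simp add: power2_eq_square algebra_simps)
    then show ?thesis
      by (cases "norm ?v = 0") (auto simp: mult_le_cancel_left)
  qed
  then show ?thesis using add sc by (auto simp: bounded_clinear_def)
qed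



lemma adj_prop':
  fixes T :: "'a::chilbert_space \<Rightarrow> 'a"
  assumes "bounded_clinear T"
  shows "cinner y (T x) = cinner (adj T y) x"
  by (metis adj_prop[OF assms] cinner_commute)

lemma comm_bcl: "S \<in> commutant X \<Longrightarrow> bounded_clinear S"
  by (simp add: commutant_def)

lemma comm_comp: "S \<in> commutant X \<Longrightarrow> T \<in> commutant X \<Longrightarrow> S \<circ> T \<in> commutant X"
  unfolding commutant_def by (auto intro: bcl_comp simp: comp_assoc) (metis comp_assoc)

lemma comm_id: "id \<in> commutant X"
  unfolding commutant_def by (simp add: bcl_id)

lemma comm_diff:
  assumes "S \<in> commutant X" "T \<in> commutant X" "\<forall>A\<in>X. clin A"
  shows "(\<lambda>x. S x - T x) \<in> commutant X"
proof -
  have "bounded_clinear (\<lambda>x. S x - T x)" using assms by (intro bcl_diff) (auto simp: commutant_def)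
  moreover have "(\<lambda>x. S x - T x) \<circ> A = A \<circ> (\<lambda>x. S x - T x)" if A: "A \<in> X" for A
  proof
    fix x
    have "S (A x) = A (S x)" "T (A x) = A (T x)" using assms(1,2) A
      by (auto simp: commutant_def fun_eq_iff)
    then show "((\<lambda>x. S x - T x) \<circ> A) x = (A \<circ> (\<lambda>x. S x - T x)) x"
      using assms(3) A by (simp add: clin_diff)
  qed
  ultimately show ?thesis by (simp add: commutant_def)
qed

lemma comm_zero:
  assumes "\<forall>A\<in>X. clin A"
  shows "(\<lambda>_. 0) \<in> commutant X"
  using assms bcl_zero by (auto simp: commutant_def fun_eq_iff clin_zero)

lemma vn_bcl: "von_neumann_algebra M \<Longrightarrow> T \<in> M \<Longrightarrow> bounded_clinear T"
  by (simp add: von_neumann_algebra_def)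

lemma vn_clin: "von_neumann_algebra M \<Longrightarrow> T \<in> M \<Longrightarrow> clin T"
  by (simp add: vn_bcl bcl_clin)

lemma vn_comm: "von_neumann_algebra M \<Longrightarrow> commutant (commutant M) = M"
  by (simp add: von_neumann_algebra_def)

lemma vn_comp: "von_neumann_algebra M \<Longrightarrow> S \<in> M \<Longrightarrow> T \<in> M \<Longrightarrow> S \<circ> T \<in> M"
  by (metis vn_comm comm_comp)

lemma vn_id: "von_neumann_algebra M \<Longrightarrow> id \<in> M"
  by (metis vn_comm comm_id)

lemma comm_clin: "\<forall>A\<in>commutant X. clin A"
  by (simp add: commutant_def bcl_clin)

lemma vn_diff: "von_neumann_algebra M \<Longrightarrow> S \<in> M \<Longrightarrow> T \<in> M \<Longrightarrow> (\<lambda>x. S x - T x) \<in> M"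
  by (metis vn_comm comm_diff comm_clin)

lemma vn_zero: "von_neumann_algebra M \<Longrightarrow> (\<lambda>_. 0) \<in> M"
  by (metis vn_comm comm_zero comm_clin)

lemma adj_in_comm:
  fixes M :: "('a::chilbert_space \<Rightarrow> 'a) set"
  assumes vn: "von_neumann_algebra M" and S: "S \<in> commutant M"
  shows "adj S \<in> commutant M"
proof -
  have Sb: "bounded_clinear S" using S by (rule comm_bcl)
  have "adj S \<circ> A = A \<circ> adj S" if A: "A \<in> M" for A
  proof
    fix x
    have Ab: "bounded_clinear A" using vn A by (rule vn_bcl)
    have aA: "adj A \<in> M" using vn A by (simp add: von_neumann_algebra_def)
    have comm: "S (adj A z) = adj A (S z)" for z using S aA by (auto simp: commutant_def fun_eq_iff)
    show "(adj S \<circ> A) x = (A \<circ> adj S) x"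
    proof (simp, rule eq_by_cinner)
      fix z
      have "cinner z (adj S (A x)) = cinner (S z) (A x)" by (simp add: adj_prop[OF Sb])
      also have "\<dots> = cinner (adj A (S z)) x" by (rule adj_prop'[OF Ab])
      also have "\<dots> = cinner (S (adj A z)) x" by (simp add: comm)
      also have "\<dots> = cinner (adj A z) (adj S x)" by (rule adj_prop[OF Sb])
      also have "\<dots> = cinner z (A (adj S x))" by (simp add: adj_prop'[OF Ab])
      finally show "cinner z (adj S (A x)) = cinner z (A (adj S x))" .
    qed
  qed
  then show ?thesis using adj_bcl[OF Sb] by (simp add: commutant_def)
qed



definition isproj :: "('a::chilbert_space \<Rightarrow> 'a) \<Rightarrow> bool" where
  "isproj e \<longleftrightarrow> bounded_clinear e \<and> e \<circ> e = e \<and> adj e = e"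

lemma isproj_sa: "isproj e \<Longrightarrow> cinner (e x) y = cinner x (e y)"
  unfolding isproj_def by (metis adj_prop)

lemma isproj_idem: "isproj e \<Longrightarrow> e (e x) = e x"
  unfolding isproj_def by (metis comp_apply)

lemma isproj_clin: "isproj e \<Longrightarrow> clin e"
  unfolding isproj_def by (simp add: bcl_clin)

lemma projections_isproj: "\<forall>T\<in>N. bounded_clinear T \<Longrightarrow> q \<in> projections N \<Longrightarrow> isproj q"
  by (simp add: projections_def isproj_def)

lemma isproj_contr:
  assumes "isproj q" shows "norm (q y) \<le> norm y"
proof -
  have "(norm (q y))\<^sup>2 = Re (cinner (q y) (q y))" by (rule norm_sq)
  also have "cinner (q y) (q y) = cinner y (q y)"
    using isproj_sa[OF assms, of y "q y"] isproj_idem[OF assms] by simp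
  also have "Re (cinner y (q y)) \<le> cmod (cinner y (q y))" by (rule complex_Re_le_cmod)
  also have "\<dots> \<le> norm y * norm (q y)" by (rule cauchy_schwarz)
  finally have "norm (q y) * norm (q y) \<le> norm y * norm (q y)" by (simp add: power2_eq_square)
  then show ?thesis by (cases "norm (q y) = 0") (auto simp: mult_le_cancel_right)
qed

lemma proj_le:
  assumes q: "isproj q" and e: "isproj e" and eq: "\<And>x. e (q x) = q x"
  shows "op_le q e"
proof -
  have qe: "q (e x) = q x" for x
  proof (rule eq_by_cinner)
    fix z
    have "cinner z (q (e x)) = cinner (q z) (e x)" by (simp add: isproj_sa[OF q])
    also have "\<dots> = cinner (e (q z)) x" by (simp add: isproj_sa[OF e])
    also have "\<dots> = cinner z (q x)" by (simp add: eq isproj_sa[OF q])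
    finally show "cinner z (q (e x)) = cinner z (q x)" .
  qed
  show ?thesis unfolding op_le_def op_pos_def
  proof
    fix x
    have ex: "cinner x (e x) = of_real ((norm (e x))\<^sup>2)"
      using isproj_sa[OF e, of x "e x"] isproj_idem[OF e] by (simp add: cinner_self)
    have qx: "cinner x (q x) = of_real ((norm (q (e x)))\<^sup>2)"
      using isproj_sa[OF q, of x "q x"] isproj_idem[OF q] by (simp add: cinner_self qe)
    have "norm (q (e x)) \<le> norm (e x)" by (rule isproj_contr[OF q])
    then have "(norm (q (e x)))\<^sup>2 \<le> (norm (e x))\<^sup>2" by (simp add: power_mono)
    then show "Im (cinner x (e x - q x)) = 0 \<and> 0 \<le> Re (cinner x (e x - q x))"
      by (simp add: cinner_diff_right ex qx)
  qed
qed

lemma proj_le_pos: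
  assumes e: "isproj e" and a: "clin a" and ap: "op_pos a" and fx: "\<And>x. a (e x) = e x"
  shows "op_le e a"
  unfolding op_le_def op_pos_def
proof
  fix x
  define v where "v = x - e x"
  have "a x - e x = a v" using a fx by (simp add: v_def clin_diff)
  moreover have "cinner (e x) (a v) = 0"
  proof -
    have "cinner (e x) (a v) = cinner (a (e x)) v" by (rule pos_herm[OF a ap])
    also have "\<dots> = cinner x (e v)" by (simp add: fx isproj_sa[OF e])
    also have "e v = 0" using isproj_clin[OF e] isproj_idem[OF e] by (simp add: v_def clin_diff)
    finally show ?thesis by (simp add: cinner_zero_right)
  qed
  moreover have "x = e x + v" by (simp add: v_def)
  ultimately have "cinner x (a x - e x) = cinner v (a v)"
    by (metis add.left_neutral cinner_add_left)
  then show "Im (cinner x (a x - e x)) = 0 \<and> 0 \<le> Re (cinner x (a x - e x))"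
    using ap by (simp add: op_pos_def)
qed

lemma proj_sup_eq:
  assumes lin: "\<forall>T\<in>N. clin T" and eQ: "e \<in> Q" and QP: "Q \<subseteq> projections N"
    and ub: "\<forall>q\<in>Q. op_le q e"
  shows "proj_sup N Q = e"
  unfolding proj_sup_def
proof (rule the_equality)
  show "e \<in> projections N \<and> (\<forall>q\<in>Q. op_le q e) \<and>
        (\<forall>r\<in>projections N. (\<forall>q\<in>Q. op_le q r) \<longrightarrow> op_le e r)"
    using eQ QP ub by auto
next
  fix s assume s: "s \<in> projections N \<and> (\<forall>q\<in>Q. op_le q s) \<and>
        (\<forall>r\<in>projections N. (\<forall>q\<in>Q. op_le q r) \<longrightarrow> op_le s r)"
  have eP: "e \<in> projections N" using eQ QP by auto
  have "op_le s e" using s eP ub by blast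
  moreover have "op_le e s" using s eQ by blast
  moreover have "clin s" "clin e" using s eP lin by (auto simp: projections_def)
  ultimately show "s = e" using op_le_antisym by blast
qed



lemma kerproj:
  fixes M :: "('a::chilbert_space \<Rightarrow> 'a) set"
  assumes vn: "von_neumann_algebra M" and TM: "T \<in> M"
  shows "\<exists>E. E \<in> projections M \<and> (\<forall>x. T (E x) = 0) \<and> (\<forall>x. T x = 0 \<longrightarrow> E x = x)"
proof -
  have Tb: "bounded_clinear T" using vn TM by (rule vn_bcl)
  have Tl: "clin T" using Tb by (rule bcl_clin)
  let ?K = "{x. T x = 0}"
  have sub: "subspace_c ?K" using Tl by (auto simp: subspace_c_def clin_zero clin_add clin_scaleC scaleC_zero_right)
  have cl: "closed ?K"
    by (rule closed_Collect_eq) (auto intro: linear_continuous_on[OF bcl_bounded_linear[OF Tb]])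
  define E where "E x = (SOME u. u \<in> ?K \<and> (\<forall>k\<in>?K. cinner k (x - u) = 0))" for x
  have Eprop: "E x \<in> ?K \<and> (\<forall>k\<in>?K. cinner k (x - E x) = 0)" for x
    unfolding E_def by (rule someI_ex) (use proj_exists[OF sub cl, of x] in blast)
  have EK: "T (E x) = 0" for x using Eprop by blast
  have Eorth: "T k = 0 \<Longrightarrow> cinner k (x - E x) = 0" for k x using Eprop by blast
  have Euniq: "u = E x" if "T u = 0" "\<And>k. T k = 0 \<Longrightarrow> cinner k (x - u) = 0" for u x
  proof -
    have "T (E x - u) = 0" using that EK Tl by (simp add: clin_diff)
    then have "cinner (E x - u) (x - u) = 0" "cinner (E x - u) (x - E x) = 0"
      using that Eorth by auto
    then have "cinner (E x - u) ((x - u) - (x - E x)) = 0" by (simp add: cinner_diff_right)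
    then have "cinner (E x - u) (E x - u) = 0" by simp
    then show ?thesis by (simp add: cinner_self_eq_zero)
  qed
  have Eadd: "E (x + y) = E x + E y" for x y
  proof (rule Euniq[symmetric])
    show "T (E x + E y) = 0" using EK Tl by (simp add: clin_add)
    fix k assume k: "T k = 0"
    have eq: "x + y - (E x + E y) = (x - E x) + (y - E y)" by (simp add: algebra_simps)
    have "cinner k (x + y - (E x + E y)) = cinner k (x - E x) + cinner k (y - E y)"
      by (simp only: eq cinner_add_right)
    then show "cinner k (x + y - (E x + E y)) = 0" using Eorth[OF k, of x] Eorth[OF k, of y]
      by simp
  qed
  have Esc: "E (scaleC c x) = scaleC c (E x)" for c x
  proof (rule Euniq[symmetric])
    show "T (scaleC c (E x)) = 0" using EK Tl by (simp add: clin_scaleC scaleC_zero_right)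
    fix k assume "T k = 0"
    then show "cinner k (scaleC c x - scaleC c (E x)) = 0"
      using Eorth[of k x] by (simp add: scaleC_diff_right[symmetric] cinner_scaleC_right)
  qed
  have Enorm: "norm (E x) \<le> norm x * 1" for x
  proof -
    have "(norm (E x))\<^sup>2 = Re (cinner (E x) (E x))" by (rule norm_sq)
    also have "cinner (E x) (E x) = cinner (E x) x"
      using Eorth[of "E x" x] EK by (simp add: cinner_diff_right)
    also have "Re (cinner (E x) x) \<le> cmod (cinner (E x) x)" by (rule complex_Re_le_cmod)
    also have "\<dots> \<le> norm (E x) * norm x" by (rule cauchy_schwarz)
    finally have "norm (E x) * norm (E x) \<le> norm (E x) * norm x" by (simp add: power2_eq_square)
    then show ?thesis by (cases "norm (E x) = 0") (auto simp: mult_le_cancel_left)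
  qed
  have Eb: "bounded_clinear E" unfolding bounded_clinear_def using Eadd Esc Enorm by blast
  have Eidem: "E (E x) = E x" for x by (rule Euniq[symmetric]) (use EK in \<open>auto simp: cinner_zero_right\<close>)
  have Esa: "cinner (E x) y = cinner x (E y)" for x y
  proof -
    have "cinner (E x) y = cinner (E x) (E y)"
      using Eorth[of "E x" y] EK by (simp add: cinner_diff_right)
    moreover have "cinner (E y) x = cinner (E y) (E x)"
      using Eorth[of "E y" x] EK by (simp add: cinner_diff_right)
    ultimately show ?thesis by (metis cinner_commute)
  qed
  have Eadj: "adj E = E" by (rule adj_unique) (rule Esa)
  have Ecomm0: "\<forall>S\<in>commutant M. E \<circ> S = S \<circ> E"
  proof
    fix S assume S: "S \<in> commutant M"
    have Sb: "bounded_clinear S" using S by (rule comm_bcl)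
    have Sl: "clin S" using Sb by (rule bcl_clin)
    have ST: "S (T x) = T (S x)" for x using S TM by (auto simp: commutant_def fun_eq_iff)
    have aS: "adj S \<in> commutant M" using adj_in_comm[OF vn S] .
    have aST: "adj S (T x) = T (adj S x)" for x using aS TM by (auto simp: commutant_def fun_eq_iff)
    have aSb: "bounded_clinear (adj S)" using aS by (rule comm_bcl)
    have "S (E x) = E (S x)" for x
      proof (rule Euniq)
        show "T (S (E x)) = 0" using ST[of "E x"] EK Sl by (simp add: clin_zero)
        fix k assume k: "T k = 0"
        have "T (adj S k) = 0" using aST[of k] k clin_zero[OF bcl_clin[OF aSb]] by simp
        then have "cinner (adj S k) (x - E x) = 0" by (rule Eorth)
        then show "cinner k (S x - S (E x)) = 0"
          by (simp add: clin_diff[OF Sl, symmetric] adj_prop'[OF Sb])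
      qed
    then show "E \<circ> S = S \<circ> E" by (simp add: fun_eq_iff)
  qed
  have Ecomm: "E \<in> commutant (commutant M)"
    using Ecomm0 Eb by (simp add: commutant_def[of "commutant M"])
  have EM: "E \<in> M" using Ecomm vn_comm[OF vn] by simp
  have "E \<in> projections M" using EM Eidem Eadj by (simp add: projections_def fun_eq_iff)
  moreover have "T x = 0 \<longrightarrow> E x = x" for x
    using Euniq[of x x] by (auto simp: cinner_zero_right)
  ultimately show ?thesis using EK by blast
qed



lemma fix_lemma:
  assumes al: "clin a" and a1: "op_le a id" and le: "Re (cinner y y) \<le> Re (cinner y (a y))"
  shows "a y = y"
proof -
  let ?D = "\<lambda>z. z - a z"
  have Dl: "clin ?D" using al by (simp add: clin_def scaleC_diff_right)
  have Dp: "op_pos ?D" using a1 by (simp add: op_le_def)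
  have "Im (cinner y (?D y)) = 0" "0 \<le> Re (cinner y (?D y))" using Dp by (auto simp: op_pos_def)
  moreover have "Re (cinner y (?D y)) \<le> 0" using le by (simp add: cinner_diff_right)
  ultimately have "cinner y (?D y) = 0" by (simp add: complex_eq_iff)
  then have "?D y = 0" by (rule pos_zero[OF Dl Dp])
  then show ?thesis by simp
qed

lemma interval_facts:
  assumes vn: "von_neumann_algebra M" and a: "a \<in> op_interval M id"
  shows "a \<in> M" "clin a" "op_pos a" "op_le a id"
proof -
  show aM: "a \<in> M" using a by (simp add: op_interval_def)
  show "clin a" using vn aM by (rule vn_clin)
  show "op_pos a" using a by (simp add: op_interval_def op_le_def)
  show "op_le a id" using a by (simp add: op_interval_def)
qed

lemma vn_isproj:
  fixes M :: "('a::chilbert_space \<Rightarrow> 'a) set"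
  shows "von_neumann_algebra M \<Longrightarrow> q \<in> projections M \<Longrightarrow> isproj q"
  by (auto simp: von_neumann_algebra_def projections_def isproj_def)

lemma s_zero:
  fixes M :: "('a::chilbert_space \<Rightarrow> 'a) set"
  assumes vn: "von_neumann_algebra M" and a: "a \<in> op_interval M id"
    and s: "s_supp M a = (\<lambda>_. 0)" and y: "a y = y"
  shows "y = 0"
proof -
  note af = interval_facts[OF vn a]
  have TM: "(\<lambda>x. x - a x) \<in> M" using vn_diff[OF vn vn_id[OF vn] af(1)] by simp
  obtain E where EP: "E \<in> projections M" and EK: "\<And>x. E x - a (E x) = 0"
    and Efix: "\<And>x. x - a x = 0 \<Longrightarrow> E x = x"
    using kerproj[OF vn TM] by blast
  have Ep: "isproj E" using vn EP by (rule vn_isproj)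
  let ?Q = "{q \<in> projections M. op_le q a}"
  have EQ: "E \<in> ?Q"
  proof -
    have "op_le E a" by (rule proj_le_pos[OF Ep af(2) af(3)]) (use EK in simp)
    then show ?thesis using EP by simp
  qed
  have ub: "\<forall>q\<in>?Q. op_le q E"
  proof
    fix q assume q: "q \<in> ?Q"
    have qp: "isproj q" using vn q by (auto intro: vn_isproj)
    show "op_le q E"
    proof (rule proj_le[OF qp Ep])
      fix x
      let ?y = "q x"
      have "Im (cinner ?y (a ?y - q ?y)) = 0 \<and> 0 \<le> Re (cinner ?y (a ?y - q ?y))"
        using q by (simp add: op_le_def op_pos_def)
      then have "Re (cinner ?y ?y) \<le> Re (cinner ?y (a ?y))"
        by (simp add: cinner_diff_right isproj_idem[OF qp])
      then have "a ?y = ?y" by (rule fix_lemma[OF af(2) af(4)])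
      then show "E (q x) = q x" using Efix by simp
    qed
  qed
  have "proj_sup M ?Q = E"
    by (rule proj_sup_eq) (use EQ ub vn in \<open>auto simp: vn_clin projections_def\<close>)
  then have "E = (\<lambda>_. 0)" using s by (simp add: s_supp_def)
  then show ?thesis using Efix[of y] y by simp
qed

lemma n_zero:
  fixes M :: "('a::chilbert_space \<Rightarrow> 'a) set"
  assumes vn: "von_neumann_algebra M" and a: "a \<in> op_interval M id"
    and s: "n_supp M a = (\<lambda>_. 0)" and y: "a y = 0"
  shows "y = 0"
proof -
  note af = interval_facts[OF vn a]
  obtain E where EP: "E \<in> projections M" and EK: "\<And>x. a (E x) = 0"
    and Efix: "\<And>x. a x = 0 \<Longrightarrow> E x = x"
    using kerproj[OF vn af(1)] by blast
  have Ep: "isproj E" using vn EP by (rule vn_isproj)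
  let ?Q = "{q \<in> projections M. q \<circ> a = (\<lambda>_. 0)}"
  have EQ: "E \<in> ?Q"
  proof -
    have "E (a x) = 0" for x
    proof (rule eq_by_cinner)
      fix z
      have "cinner z (E (a x)) = cinner (E z) (a x)" by (simp add: isproj_sa[OF Ep])
      also have "\<dots> = cinner (a (E z)) x" by (rule pos_herm[OF af(2) af(3)])
      finally show "cinner z (E (a x)) = cinner z 0" by (simp add: EK cinner_zero_left cinner_zero_right)
    qed
    then show ?thesis using EP by (simp add: fun_eq_iff)
  qed
  have ub: "\<forall>q\<in>?Q. op_le q E"
  proof
    fix q assume q: "q \<in> ?Q"
    have qp: "isproj q" using vn q by (auto intro: vn_isproj)
    have qa: "q (a z) = 0" for z using q by (auto simp: fun_eq_iff)
    show "op_le q E"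
    proof (rule proj_le[OF qp Ep])
      fix x
      have "a (q x) = 0"
      proof (rule eq_by_cinner)
        fix z
        have "cinner z (a (q x)) = cinner (a z) (q x)" by (rule pos_herm[OF af(2) af(3)])
        also have "\<dots> = cinner (q (a z)) x" by (simp add: isproj_sa[OF qp])
        finally show "cinner z (a (q x)) = cinner z 0" by (simp add: qa cinner_zero_left cinner_zero_right)
      qed
      then show "E (q x) = q x" using Efix by simp
    qed
  qed
  have "proj_sup M ?Q = E"
    by (rule proj_sup_eq) (use EQ ub vn in \<open>auto simp: vn_clin projections_def\<close>)
  then have "E = (\<lambda>_. 0)" using s by (simp add: n_supp_def)
  then show ?thesis using Efix[of y] y by simp
qed



lemma adj_zero: "adj (\<lambda>_::'a::chilbert_space. 0) = (\<lambda>_. 0)"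
  by (rule adj_unique) (simp add: cinner_zero_left cinner_zero_right)

lemma corner_part:
  fixes M :: "('a::chilbert_space \<Rightarrow> 'a) set"
  assumes vn: "von_neumann_algebra M" and a: "a \<in> op_interval M id"
    and st: "strict_in M a" and pM: "p \<in> projections M"
  shows "p \<circ> a \<circ> p \<in> op_interval (corner p M) p \<and> strict_in (corner p M) (p \<circ> a \<circ> p)"
proof -
  note af = interval_facts[OF vn a]
  have sz: "\<And>y. a y = y \<Longrightarrow> y = 0" using s_zero[OF vn a] st by (auto simp: strict_in_def)
  have nz: "\<And>y. a y = 0 \<Longrightarrow> y = 0" using n_zero[OF vn a] st by (auto simp: strict_in_def)
  have pp: "isproj p" using vn pM by (rule vn_isproj)
  have pl: "clin p" using pp by (rule isproj_clin)
  have pid: "p (p x) = x" if "x = p z" for x z using that isproj_idem[OF pp] by simp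
  have corner_el: "\<exists>m\<in>M. c = p \<circ> m \<circ> p" if "c \<in> corner p M" for c
    using that by (auto simp: corner_def)
  have pM': "p \<in> M" using pM by (simp add: projections_def)
  have cM: "c \<in> M" if "c \<in> corner p M" for c
    using corner_el[OF that] vn_comp[OF vn] pM' by blast
  have cbcl: "\<forall>T\<in>corner p M. bounded_clinear T" using cM vn vn_bcl by blast
  have clin_c: "\<forall>T\<in>corner p M. clin T" using cbcl bcl_clin by blast
  have cp: "c (p x) = c x" "p (c x) = c x" if "c \<in> corner p M" for c x
    using corner_el[OF that] isproj_idem[OF pp] by auto
  have papC: "p \<circ> a \<circ> p \<in> corner p M" using af(1) by (auto simp: corner_def)
  have pap0: "op_le (\<lambda>_. 0) (p \<circ> a \<circ> p)"
    unfolding op_le_def op_pos_def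
  proof
    fix x
    have "cinner x (p (a (p x))) = cinner (p x) (a (p x))" by (simp add: isproj_sa[OF pp])
    then show "Im (cinner x ((p \<circ> a \<circ> p) x - 0)) = 0 \<and> 0 \<le> Re (cinner x ((p \<circ> a \<circ> p) x - 0))"
      using af(3) by (simp add: op_pos_def)
  qed
  have pap1: "op_le (p \<circ> a \<circ> p) p"
    unfolding op_le_def op_pos_def
  proof
    fix x
    have "p x - p (a (p x)) = p (p x - a (p x))" using pl isproj_idem[OF pp] by (simp add: clin_diff)
    then have "cinner x (p x - p (a (p x))) = cinner (p x) (p x - a (p x))" by (simp add: isproj_sa[OF pp])
    then show "Im (cinner x (p x - (p \<circ> a \<circ> p) x)) = 0 \<and> 0 \<le> Re (cinner x (p x - (p \<circ> a \<circ> p) x))"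
      using af(4) by (simp add: op_le_def op_pos_def)
  qed
  have int: "p \<circ> a \<circ> p \<in> op_interval (corner p M) p"
    using papC pap0 pap1 by (simp add: op_interval_def)
  have zC: "(\<lambda>_. 0) \<in> corner p M"
  proof -
    have "(\<lambda>_. 0) = p \<circ> (\<lambda>_. 0) \<circ> p" using clin_zero[OF pl] by (simp add: fun_eq_iff)
    then show ?thesis using vn_zero[OF vn] unfolding corner_def by blast
  qed
  have zP: "(\<lambda>_. 0) \<in> projections (corner p M)"
    using zC adj_zero by (simp add: projections_def comp_def)
  have le00: "op_le (\<lambda>_. 0) (\<lambda>_::'a. 0)" by (simp add: op_le_def op_pos_def cinner_zero_right)
  have cproj: "isproj q" if "q \<in> projections (corner p M)" for q
    using projections_isproj[OF cbcl that] .
  have cprojC: "q \<in> corner p M" if "q \<in> projections (corner p M)" for q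
    using that by (simp add: projections_def)
  have s1: "s_supp (corner p M) (p \<circ> a \<circ> p) = (\<lambda>_. 0)"
    unfolding s_supp_def
  proof (rule proj_sup_eq[OF clin_c])
    show "(\<lambda>_. 0) \<in> {q \<in> projections (corner p M). op_le q (p \<circ> a \<circ> p)}" using zP pap0 by simp
    show "{q \<in> projections (corner p M). op_le q (p \<circ> a \<circ> p)} \<subseteq> projections (corner p M)" by blast
    show "\<forall>q\<in>{q \<in> projections (corner p M). op_le q (p \<circ> a \<circ> p)}. op_le q (\<lambda>_. 0)"
    proof
      fix q assume q: "q \<in> {q \<in> projections (corner p M). op_le q (p \<circ> a \<circ> p)}"
      have qp: "isproj q" using q cproj by blast
      have qC: "q \<in> corner p M" using q cprojC by blast
      have "q x = 0" for x
      proof -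
        let ?y = "q x"
        have py: "p ?y = ?y" using cp(2)[OF qC] .
        have qy: "q ?y = ?y" using isproj_idem[OF qp] .
        have "Im (cinner ?y (p (a (p ?y)) - q ?y)) = 0 \<and> 0 \<le> Re (cinner ?y (p (a (p ?y)) - q ?y))"
          using q by (simp add: op_le_def op_pos_def)
        moreover have "cinner ?y (p (a (p ?y))) = cinner ?y (a ?y)"
          using isproj_sa[OF pp, of ?y "a ?y"] py by simp
        ultimately have "Re (cinner ?y ?y) \<le> Re (cinner ?y (a ?y))"
          using qy by (simp add: cinner_diff_right)
        then have "a ?y = ?y" by (rule fix_lemma[OF af(2) af(4)])
        then show ?thesis by (rule sz)
      qed
      then have "q = (\<lambda>_. 0)" by (simp add: fun_eq_iff)
      then show "op_le q (\<lambda>_. 0)" using le00 by simp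
    qed
  qed
  have n1: "n_supp (corner p M) (p \<circ> a \<circ> p) = (\<lambda>_. 0)"
    unfolding n_supp_def
  proof (rule proj_sup_eq[OF clin_c])
    show "(\<lambda>_. 0) \<in> {q \<in> projections (corner p M). q \<circ> (p \<circ> a \<circ> p) = (\<lambda>_. 0)}" using zP by (simp add: comp_def)
    show "{q \<in> projections (corner p M). q \<circ> (p \<circ> a \<circ> p) = (\<lambda>_. 0)} \<subseteq> projections (corner p M)" by blast
    show "\<forall>q\<in>{q \<in> projections (corner p M). q \<circ> (p \<circ> a \<circ> p) = (\<lambda>_. 0)}. op_le q (\<lambda>_. 0)"
    proof
      fix q assume q: "q \<in> {q \<in> projections (corner p M). q \<circ> (p \<circ> a \<circ> p) = (\<lambda>_. 0)}"
      have qp: "isproj q" using q cproj by blast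
      have qC: "q \<in> corner p M" using q cprojC by blast
      have qz: "q (p (a (p z))) = 0" for z using q by (auto simp: fun_eq_iff)
      have "q x = 0" for x
      proof -
        let ?y = "q x"
        have py: "p ?y = ?y" using cp(2)[OF qC] .
        have "q (a ?y) = 0" using qz[of ?y] py cp(1)[OF qC] by simp
        then have "cinner ?y (a ?y) = 0" using isproj_sa[OF qp, of x "a ?y"] by (simp add: cinner_zero_right)
        then have "a ?y = 0" by (rule pos_zero[OF af(2) af(3)])
        then show ?thesis by (rule nz)
      qed
      then have "q = (\<lambda>_. 0)" by (simp add: fun_eq_iff)
      then show "op_le q (\<lambda>_. 0)" using le00 by simp
    qed
  qed
  show ?thesis using int s1 n1 by (simp add: strict_in_def)
qed

lemma compl_proj:
  fixes M :: "('a::chilbert_space \<Rightarrow> 'a) set"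
  assumes vn: "von_neumann_algebra M" and pM: "p \<in> projections M"
  shows "(\<lambda>x. x - p x) \<in> projections M"
proof -
  have pp: "isproj p" using vn pM by (rule vn_isproj)
  have pl: "clin p" using pp by (rule isproj_clin)
  have pM': "p \<in> M" using pM by (simp add: projections_def)
  have inM: "(\<lambda>x. x - p x) \<in> M" using vn_diff[OF vn vn_id[OF vn] pM'] by simp
  have idem: "(\<lambda>x. x - p x) \<circ> (\<lambda>x. x - p x) = (\<lambda>x. x - p x)"
    using pl isproj_idem[OF pp] by (simp add: fun_eq_iff clin_diff)
  have adj: "adj (\<lambda>x. x - p x) = (\<lambda>x. x - p x)"
    by (rule adj_unique) (simp add: cinner_diff_left cinner_diff_right isproj_sa[OF pp])
  show ?thesis using inM idem adj by (simp add: projections_def)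
qed

theorem lemma2p1:
  fixes M :: "('h::chilbert_space \<Rightarrow> 'h) set" and a p :: "'h \<Rightarrow> 'h"
  assumes "von_neumann_algebra M"
    and "a \<in> op_interval M id"
    and "strict_in M a"
    and "p \<in> projections M"
  shows "p \<circ> a \<circ> p \<in> op_interval (corner p M) p
       \<and> strict_in (corner p M) (p \<circ> a \<circ> p)
       \<and> (\<lambda>x. x - p x) \<circ> a \<circ> (\<lambda>x. x - p x) \<in> op_interval (corner (\<lambda>x. x - p x) M) (\<lambda>x. x - p x)
       \<and> strict_in (corner (\<lambda>x. x - p x) M) ((\<lambda>x. x - p x) \<circ> a \<circ> (\<lambda>x. x - p x))"
  using corner_part[OF assms] corner_part[OF assms(1-3) compl_proj[OF assms(1,4)]] by blast

end
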